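(* Let $G=(V,E)$ be a graph with capacities $b_v\ge0$, demands $d_{u,e},d_{v,e}\ge0$ and profits $p_e\ge0$ for each edge $e=uv$, forming a conflict-free instance. Let $M'\subseteq E$ satisfy $\sum_{e\in\delta_{M'}(v)\setminus L(v)}d_{v,e}\le b_v$ for every $v\in V$, where $L(v)$ is a set of the two edges of $\delta_{M'}(v)$ with highest $d_{v,e}$ (or $L(v)=\delta_{M'}(v)$ if $|\delta_{M'}(v)|\le1$). Then one can find $M\subseteq M'$ with $\sum_{e\in\delta_M(v)}d_{v,e}\le b_v$ for all $v\in V$ and $p(M)\ge\frac{p(M')}{4}$.
   Context: The instance is conflict-free if for any two edges $e,f\in E$ and every vertex $v$, $\sum_{g\in\{e,f\}\cap\delta(v)}d_{v,g}\le b_v$. $\delta(v)$ is the set of edges incident to $v$, $\delta_{M'}(v)=\delta(v)\cap M'$, $p(M)=\sum_{e\in M}p_e$. *)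

theory Defs
  imports Complex_Main
begin

definition is_graph :: "'a set \<Rightarrow> 'a set set \<Rightarrow> bool" where
  "is_graph V E \<longleftrightarrow> finite V \<and> (\<forall>e\<in>E. e \<subseteq> V \<and> card e = 2)"

definition delta :: "'a set set \<Rightarrow> 'a \<Rightarrow> 'a set set" where
  "delta F v = {e\<in>F. v \<in> e}"

definition conflict_free ::
  "'a set \<Rightarrow> 'a set set \<Rightarrow> ('a \<Rightarrow> real) \<Rightarrow> ('a \<Rightarrow> 'a set \<Rightarrow> real) \<Rightarrow> bool" where
  "conflict_free V E b d \<longleftrightarrow>
     (\<forall>e\<in>E. \<forall>f\<in>E. \<forall>v\<in>V. (\<Sum>g\<in>{e,f} \<inter> delta E v. d v g) \<le> b v)"

definition top_two :: "('a \<Rightarrow> 'a set \<Rightarrow> real) \<Rightarrow> 'a set set \<Rightarrow> 'a \<Rightarrow> 'a set set \<Rightarrow> bool" where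
  "top_two d M' v L \<longleftrightarrow> L \<subseteq> delta M' v \<and> card L = min 2 (card (delta M' v)) \<and>
     (\<forall>e\<in>L. \<forall>f\<in>delta M' v - L. d v f \<le> d v e)"

end

theory Submission
  imports Defs
begin

lemma count_sub:
  assumes "finite V" "e \<subseteq> V" "A \<subseteq> e"
  shows "card {S \<in> Pow V. S \<inter> e = A} = 2 ^ card (V - e)"
proof -
  have "bij_betw (\<lambda>T. T \<union> A) (Pow (V - e)) {S \<in> Pow V. S \<inter> e = A}"
  proof (rule bij_betw_byWitness[where f' = "\<lambda>S. S - e"])
    show "\<forall>a\<in>Pow (V - e). a \<union> A - e = a" using assms by auto
    show "\<forall>a'\<in>{S \<in> Pow V. S \<inter> e = A}. a' - e \<union> A = a'" by auto
    show "(\<lambda>T. T \<union> A) ` Pow (V - e) \<subseteq> {S \<in> Pow V. S \<inter> e = A}" using assms by auto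
    show "(\<lambda>S. S - e) ` {S \<in> Pow V. S \<inter> e = A} \<subseteq> Pow (V - e)" by auto
  qed
  then have "card {S \<in> Pow V. S \<inter> e = A} = card (Pow (V - e))"
    by (metis bij_betw_same_card)
  also have "\<dots> = 2 ^ card (V - e)" using assms by (simp add: card_Pow)
  finally show ?thesis .
qed

lemma sum_small:
  fixes d :: "'b \<Rightarrow> real"
  assumes "F \<subseteq> G" "card F \<le> 2" "finite F"
    and one: "\<And>e. e \<in> G \<Longrightarrow> d e \<le> c"
    and two: "\<And>e f. e \<in> G \<Longrightarrow> f \<in> G \<Longrightarrow> e \<noteq> f \<Longrightarrow> d e + d f \<le> c"
    and "c \<ge> 0"
  shows "sum d F \<le> c"
proof (cases "card F")
  case 0 then show ?thesis using assms by simp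
next
  case (Suc k)
  show ?thesis
  proof (cases k)
    case 0
    then obtain x where "F = {x}" using Suc card_1_singletonE by auto
    then show ?thesis using assms by auto
  next
    case (Suc j)
    then have "card F = 2" using \<open>card F = Suc k\<close> assms(2) by simp
    then obtain x y where "F = {x, y}" "x \<noteq> y" by (meson card_2_iff)
    then show ?thesis using assms by auto
  qed
qed

theorem lemma5:
  fixes V :: "'a set" and E :: "'a set set"
    and b :: "'a \<Rightarrow> real" and d :: "'a \<Rightarrow> 'a set \<Rightarrow> real" and p :: "'a set \<Rightarrow> real"
    and M' :: "'a set set"
  assumes "is_graph V E"
    and "\<forall>v\<in>V. b v \<ge> 0"
    and "\<forall>e\<in>E. \<forall>v\<in>e. d v e \<ge> 0"
    and "\<forall>e\<in>E. p e \<ge> 0"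
    and "conflict_free V E b d"
    and "M' \<subseteq> E"
    and "\<forall>v\<in>V. \<exists>L. top_two d M' v L \<and> (\<Sum>e\<in>delta M' v - L. d v e) \<le> b v"
  shows "\<exists>M\<subseteq>M'. (\<forall>v\<in>V. (\<Sum>e\<in>delta M v. d v e) \<le> b v) \<and> sum p M \<ge> sum p M' / 4"
proof (cases "M' = {}")
  case True then show ?thesis using assms(2) by (auto simp: delta_def)
next
  case False
  have finV: "finite V" using assms(1) by (simp add: is_graph_def)
  have EV: "E \<subseteq> Pow V" using assms(1) by (auto simp: is_graph_def)
  have finE: "finite E" using EV finV by (meson finite_Pow_iff finite_subset)
  have finM': "finite M'" using finE assms(6) finite_subset by blast
  define L where "L v = (SOME L. top_two d M' v L \<and> (\<Sum>e\<in>delta M' v - L. d v e) \<le> b v)" for v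
  have L: "top_two d M' v (L v) \<and> (\<Sum>e\<in>delta M' v - L v. d v e) \<le> b v" if "v \<in> V" for v
    using assms(7) that unfolding L_def by (metis (mono_tags, lifting) someI_ex)
  define MS where "MS S = {e \<in> M'. \<forall>w\<in>e. (e \<in> L w \<longleftrightarrow> w \<in> S)}" for S
  define A where "A e = {w \<in> e. e \<in> L w}" for e
  have memMS: "e \<in> MS S \<longleftrightarrow> e \<in> M' \<and> S \<inter> e = A e" for e S
    unfolding MS_def A_def by blast
  have feas: "(\<Sum>e\<in>delta (MS S) v. d v e) \<le> b v" if v: "v \<in> V" for S v
  proof (cases "v \<in> S")
    case True
    have sub: "delta (MS S) v \<subseteq> L v" unfolding delta_def MS_def using True by auto
    have tt: "top_two d M' v (L v)" using L v by blast
    have finL: "finite (L v)" using tt finM' unfolding top_two_def delta_def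
      by (metis (no_types, lifting) finite_subset mem_Collect_eq subsetI)
    have cL: "card (L v) \<le> 2" using tt unfolding top_two_def by simp
    have LE: "L v \<subseteq> delta E v" using tt assms(6) unfolding top_two_def delta_def by auto
    show ?thesis
    proof (rule sum_small[where G = "delta E v"])
      show "delta (MS S) v \<subseteq> delta E v" using sub LE by blast
      show "card (delta (MS S) v) \<le> 2" using sub finL cL by (meson card_mono order_trans)
      show "finite (delta (MS S) v)" using sub finL finite_subset by blast
      show "d v e \<le> b v" if "e \<in> delta E v" for e
      proof -
        have "e \<in> E" using that by (simp add: delta_def)
        then have "(\<Sum>g\<in>{e,e} \<inter> delta E v. d v g) \<le> b v" using assms(5) v
          unfolding conflict_free_def by blast
        then show ?thesis using that by simp
      qed
      show "d v e + d v f \<le> b v" if "e \<in> delta E v" "f \<in> delta E v" "e \<noteq> f" for e f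
      proof -
        have "e \<in> E" "f \<in> E" using that by (auto simp: delta_def)
        then have "(\<Sum>g\<in>{e,f} \<inter> delta E v. d v g) \<le> b v" using assms(5) v
          unfolding conflict_free_def by blast
        moreover have "{e,f} \<inter> delta E v = {e,f}" using that by auto
        ultimately show ?thesis using that by simp
      qed
      show "0 \<le> b v" using assms(2) v by blast
    qed
  next
    case False
    have sub: "delta (MS S) v \<subseteq> delta M' v - L v" unfolding delta_def MS_def using False by auto
    have fin: "finite (delta M' v - L v)" using finM' unfolding delta_def by simp
    have "(\<Sum>e\<in>delta (MS S) v. d v e) \<le> (\<Sum>e\<in>delta M' v - L v. d v e)"
      apply (rule sum_mono2[OF fin sub])
      using assms(3,6) unfolding delta_def by auto
    also have "\<dots> \<le> b v" using L v by blast
    finally show ?thesis .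
  qed
  obtain e0 where e0: "e0 \<in> M'" using False by blast
  have "e0 \<subseteq> V" "card e0 = 2" using e0 assms(1,6) by (auto simp: is_graph_def)
  then have n2: "card V \<ge> 2" using finV by (metis card_mono)
  have cnt: "card {S \<in> Pow V. e \<in> MS S} = 2 ^ (card V - 2)" if "e \<in> M'" for e
  proof -
    have eV: "e \<subseteq> V" "card e = 2" using that assms(1,6) by (auto simp: is_graph_def)
    have "{S \<in> Pow V. e \<in> MS S} = {S \<in> Pow V. S \<inter> e = A e}" using memMS that by auto
    also have "card \<dots> = 2 ^ card (V - e)"
      by (rule count_sub[OF finV eV(1)]) (auto simp: A_def)
    also have "card (V - e) = card V - 2" using eV finV
      by (metis card_Diff_subset finite_subset)
    finally show ?thesis .
  qed
  have total: "(\<Sum>S\<in>Pow V. sum p (MS S)) = 2 ^ (card V - 2) * sum p M'"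
  proof -
    have MSsub: "MS S \<subseteq> M'" for S unfolding MS_def by blast
    have "(\<Sum>S\<in>Pow V. sum p (MS S)) = (\<Sum>S\<in>Pow V. \<Sum>e\<in>M'. if e \<in> MS S then p e else 0)"
    proof (rule sum.cong[OF refl])
      fix S
      have "MS S = {e \<in> M'. e \<in> MS S}" using MSsub by blast
      then show "sum p (MS S) = (\<Sum>e\<in>M'. if e \<in> MS S then p e else 0)"
        using sum.inter_filter[OF finM', of p "\<lambda>e. e \<in> MS S"] by simp
    qed
    also have "\<dots> = (\<Sum>e\<in>M'. \<Sum>S\<in>Pow V. if e \<in> MS S then p e else 0)"
      by (rule sum.swap)
    also have "\<dots> = (\<Sum>e\<in>M'. p e * 2 ^ (card V - 2))"
    proof (rule sum.cong[OF refl])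
      fix e assume e: "e \<in> M'"
      have "(\<Sum>S\<in>Pow V. if e \<in> MS S then p e else 0) = (\<Sum>S\<in>{S \<in> Pow V. e \<in> MS S}. p e)"
        using sum.inter_filter[of "Pow V" "\<lambda>_. p e" "\<lambda>S. e \<in> MS S"] finV by simp
      also have "\<dots> = p e * 2 ^ (card V - 2)" using cnt[OF e] by simp
      finally show "(\<Sum>S\<in>Pow V. if e \<in> MS S then p e else 0) = p e * 2 ^ (card V - 2)" .
    qed
    also have "\<dots> = 2 ^ (card V - 2) * sum p M'" by (simp add: sum_distrib_right mult.commute)
    finally show ?thesis .
  qed
  have "\<exists>S\<in>Pow V. sum p (MS S) \<ge> sum p M' / 4"
  proof (rule ccontr)
    assume "\<not> ?thesis"
    then have lt: "\<forall>S\<in>Pow V. sum p (MS S) < sum p M' / 4" by (meson not_le)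
    have "(\<Sum>S\<in>Pow V. sum p (MS S)) < (\<Sum>S\<in>Pow V. sum p M' / 4)"
      by (rule sum_strict_mono) (use finV lt in auto)
    also have "\<dots> = 2 ^ card V * (sum p M' / 4)" using finV by (simp add: card_Pow)
    also have "(2::real) ^ card V = 2 ^ (card V - 2) * 4"
    proof -
      have "card V = (card V - 2) + 2" using n2 by simp
      then have "(2::real) ^ card V = 2 ^ (card V - 2) * 2 ^ 2" by (metis power_add)
      then show ?thesis by simp
    qed
    finally show False using total by simp
  qed
  then obtain S where "S \<in> Pow V" "sum p (MS S) \<ge> sum p M' / 4" by blast
  moreover have "MS S \<subseteq> M'" unfolding MS_def by blast
  ultimately show ?thesis using feas by blast
qed

end
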